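(* Let $\mathcal{A}$ be a central and essential arrangement in $\mathbb{Q}^l$ as in the context, with $\lcm$-period $\rho_0$. If a prime $p$ is not good for $\mathcal{A}$, then $p$ divides $\rho_0$.
   Context: $\mathcal{A}=\{H_1,\dots,H_n\}$: $n$ distinct linear hyperplanes in $\mathbb{Q}^l$ with $\bigcap H_i=\{0\}$, $H_i=\{\alpha_i=0\}$, $\alpha_i=\sum_{k=1}^lc_{ki}x_k$ with $c_{ki}\in\mathbb{Z}$ not all divisible by any prime. $p$ is good for $\mathcal{A}$ if the reduction mod $p$ of $\prod\alpha_i$ is reduced, equivalently no reduction $(\alpha_i)_p$ is a scalar multiple of $(\alpha_j)_p$ for $i<j$. Let $C=(c_{ki})\in\mathrm{Mat}_{l\times n}(\mathbb{Z})$ with columns $c_1,\dots,c_n$; for nonempty $J=\{i_1<\dots<i_k\}\subseteq[n]$, $C_J=(c_{i_1},\dots,c_{i_k})$. Its Smith normal form has nonzero diagonal entries $e_{J,1}\mid\dots\mid e_{J,r}$ (positive), $r=\mathrm{rk}(C_J)$; set $e(J)=e_{J,r}$. The $\lcm$-period is $\rho_0=\lcm\{e(J): J\subseteq[n],\ 1\le|J|\le l\}$. *)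

theory Defs
  imports "Jordan_Normal_Form.Determinant" "HOL-Computational_Algebra.Primes" "HOL-Number_Theory.Cong"
begin

text \<open>Arrangement data: an integer l x n matrix C whose i-th column holds the
  coefficients of alpha_i = sum_k c_ki x_k. Indices are 0-based.\<close>

definition primitive_columns :: "int mat \<Rightarrow> bool" where
  "primitive_columns C \<longleftrightarrow>
     (\<forall>i<dim_col C. \<forall>p::int. prime p \<longrightarrow> \<not> (\<forall>k<dim_row C. p dvd C $$ (k, i)))"

definition distinct_hyperplanes :: "int mat \<Rightarrow> bool" where
  "distinct_hyperplanes C \<longleftrightarrow>
     (\<forall>i j. i < j \<longrightarrow> j < dim_col C \<longrightarrow>
        \<not> (\<exists>q::rat. \<forall>k<dim_row C. rat_of_int (C $$ (k, j)) = q * rat_of_int (C $$ (k, i))))"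

definition essential_arr :: "int mat \<Rightarrow> bool" where
  "essential_arr C \<longleftrightarrow>
     (\<forall>x::nat \<Rightarrow> rat. (\<forall>i<dim_col C. (\<Sum>k<dim_row C. rat_of_int (C $$ (k, i)) * x k) = 0)
        \<longrightarrow> (\<forall>k<dim_row C. x k = 0))"

definition good_prime :: "int mat \<Rightarrow> nat \<Rightarrow> bool" where
  "good_prime C p \<longleftrightarrow>
     \<not> (\<exists>i j. i < j \<and> j < dim_col C \<and>
          (\<exists>c::int. \<forall>k<dim_row C. [C $$ (k, i) = c * C $$ (k, j)] (mod int p)))"

definition col_submat :: "int mat \<Rightarrow> nat set \<Rightarrow> int mat" where
  "col_submat C J = mat (dim_row C) (card J) (\<lambda>(k, t). C $$ (k, sorted_list_of_set J ! t))"

definition is_smith_form :: "int mat \<Rightarrow> int mat \<Rightarrow> nat \<Rightarrow> (nat \<Rightarrow> int) \<Rightarrow> bool" where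
  "is_smith_form A D r e \<longleftrightarrow>
     (\<exists>P Q. P \<in> carrier_mat (dim_row A) (dim_row A) \<and> Q \<in> carrier_mat (dim_col A) (dim_col A) \<and>
        (det P = 1 \<or> det P = -1) \<and> (det Q = 1 \<or> det Q = -1) \<and> P * A * Q = D) \<and>
     D \<in> carrier_mat (dim_row A) (dim_col A) \<and>
     r \<le> min (dim_row A) (dim_col A) \<and>
     (\<forall>i<dim_row A. \<forall>j<dim_col A. i \<noteq> j \<longrightarrow> D $$ (i, j) = 0) \<and>
     (\<forall>i<r. D $$ (i, i) = e i \<and> e i > 0) \<and>
     (\<forall>i. i + 1 < r \<longrightarrow> e i dvd e (i + 1)) \<and>
     (\<forall>i. r \<le> i \<and> i < min (dim_row A) (dim_col A) \<longrightarrow> D $$ (i, i) = 0)"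

definition last_inv_factor :: "int mat \<Rightarrow> int" where
  "last_inv_factor A = (SOME x. \<exists>D r e. is_smith_form A D r e \<and> r \<ge> 1 \<and> x = e (r - 1))"

definition lcm_period :: "int mat \<Rightarrow> int" where
  "lcm_period C = Lcm {last_inv_factor (col_submat C J) | J.
      J \<subseteq> {0..<dim_col C} \<and> 1 \<le> card J \<and> card J \<le> dim_row C}"

end

theory Submission
  imports Defs "Jordan_Normal_Form.Column_Operations"
begin

definition ueq :: "nat \<Rightarrow> int mat \<Rightarrow> int mat \<Rightarrow> bool" where
"ueq l A B \<longleftrightarrow> (\<exists>P Q. P \<in> carrier_mat l l \<and> Q \<in> carrier_mat 2 2 \<and> (det P = 1 \<or> det P = -1)
   \<and> (det Q = 1 \<or> det Q = -1) \<and> P * A * Q = B)"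

lemma ueq_refl: "A \<in> carrier_mat l 2 \<Longrightarrow> ueq l A A"
  unfolding ueq_def by (rule exI[of _ "1\<^sub>m l"], rule exI[of _ "1\<^sub>m 2"], auto)

lemma ueq_carrier: "A \<in> carrier_mat l 2 \<Longrightarrow> ueq l A B \<Longrightarrow> B \<in> carrier_mat l 2"
  unfolding ueq_def by auto

lemma ueq_left: assumes "A \<in> carrier_mat l 2" "ueq l A B" "E \<in> carrier_mat l l" "det E = 1 \<or> det E = -1"
  shows "ueq l A (E * B)"
proof -
  obtain P Q where PQ: "P \<in> carrier_mat l l" "Q \<in> carrier_mat 2 2" "det P = 1 \<or> det P = -1"
   "det Q = 1 \<or> det Q = -1" "P * A * Q = B" using assms(2) unfolding ueq_def by auto
  have "(E * P) * A * Q = E * (P * A) * Q" using PQ assms assoc_mult_mat[of E l l P l A 2] by simp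
  also have "... = E * (P * A * Q)" using PQ assms assoc_mult_mat[of E l l "P*A" 2 Q 2] by simp
  finally have "E * B = (E * P) * A * Q" using PQ by simp
  moreover have "det (E * P) = 1 \<or> det (E * P) = -1" using PQ assms det_mult[of E l P] by auto
  ultimately show ?thesis unfolding ueq_def using PQ assms by (intro exI[of _ "E*P"] exI[of _ Q]) auto
qed

lemma ueq_right: assumes "A \<in> carrier_mat l 2" "ueq l A B" "F \<in> carrier_mat 2 2" "det F = 1 \<or> det F = -1"
  shows "ueq l A (B * F)"
proof -
  obtain P Q where PQ: "P \<in> carrier_mat l l" "Q \<in> carrier_mat 2 2" "det P = 1 \<or> det P = -1"
   "det Q = 1 \<or> det Q = -1" "P * A * Q = B" using assms(2) unfolding ueq_def by auto
  have "B * F = P * A * (Q * F)" using PQ assms assoc_mult_mat[of "P*A" l 2 Q 2 F 2] by simp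
  moreover have "det (Q * F) = 1 \<or> det (Q * F) = -1" using PQ assms det_mult[of Q 2 F] by auto
  ultimately show ?thesis unfolding ueq_def using PQ assms by (intro exI[of _ "P"] exI[of _ "Q*F"]) auto
qed

lemma ueq_addrow: assumes "A \<in> carrier_mat l 2" "ueq l A B" "k \<noteq> m" "k < l" "m < l"
  shows "ueq l A (addrow a k m B)"
proof -
  have B: "B \<in> carrier_mat l 2" using assms ueq_carrier by auto
  show ?thesis using addrow_mat[OF B assms(5), of a k] ueq_left[OF assms(1,2), of "addrow_mat l a k m"]
    det_addrow_mat[OF assms(3)] by auto
qed

lemma ueq_swaprows: assumes "A \<in> carrier_mat l 2" "ueq l A B" "k < l" "m < l"
  shows "ueq l A (swaprows k m B)"
proof -
  have B: "B \<in> carrier_mat l 2" using assms ueq_carrier by auto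
  show ?thesis
  proof (cases "k = m")
    case True
    have "swaprows k m B = B" using B True by (intro eq_matI) auto
    then show ?thesis using assms by simp
  next
    case False
    then show ?thesis using swaprows_mat[OF B assms(3,4)] ueq_left[OF assms(1,2), of "swaprows_mat l k m"]
      det_swaprows_mat[OF assms(3,4) False] by auto
  qed
qed

lemma ueq_multrow: assumes "A \<in> carrier_mat l 2" "ueq l A B" "k < l" "a = 1 \<or> a = -1"
  shows "ueq l A (multrow k a B)"
proof -
  have B: "B \<in> carrier_mat l 2" using assms ueq_carrier by auto
  show ?thesis using multrow_mat[OF B, of k a] ueq_left[OF assms(1,2), of "multrow_mat l k a"]
    det_multrow_mat[OF assms(3)] assms(4) by auto
qed

lemma ueq_addcol: assumes "A \<in> carrier_mat l 2" "ueq l A B" "k \<noteq> m" "k < 2" "m < 2"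
  shows "ueq l A (addcol a k m B)"
proof -
  have B: "B \<in> carrier_mat l 2" using assms ueq_carrier by auto
  show ?thesis using addcol_mat[OF B assms(5), of a k] ueq_right[OF assms(1,2), of "addrow_mat 2 a m k"]
    det_addrow_mat[of m k] assms(3) by auto
qed

lemma ueq_swapcols: assumes "A \<in> carrier_mat l 2" "ueq l A B" "k < 2" "m < 2"
  shows "ueq l A (swapcols k m B)"
proof -
  have B: "B \<in> carrier_mat l 2" using assms ueq_carrier by auto
  show ?thesis
  proof (cases "k = m")
    case True
    have "swapcols k m B = B" using B True by (intro eq_matI) auto
    then show ?thesis using assms by simp
  next
    case False
    then show ?thesis using swapcols_mat[OF B assms(3,4)] ueq_right[OF assms(1,2), of "swaprows_mat 2 k m"]
      det_swaprows_mat[OF assms(3,4) False] by auto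
  qed
qed

lemma mod_small: fixes x g :: int assumes "\<not> g dvd x" "g \<noteq> 0" shows "x mod g \<noteq> 0" "nat \<bar>x mod g\<bar> < nat \<bar>g\<bar>"
  "x mod g = - (x div g) * g + x"
proof -
  show "x mod g \<noteq> 0" using assms by auto
  from assms(2) show "nat \<bar>x mod g\<bar> < nat \<bar>g\<bar>" 
    by (smt (verit) Euclidean_Rings.pos_mod_bound neg_mod_bound pos_mod_sign neg_mod_sign nat_less_eq_zless)
  show "x mod g = - (x div g) * g + x" by (simp add: minus_div_mult_eq_mod[symmetric])
qed

context fixes A :: "int mat" and l :: nat assumes A: "A \<in> carrier_mat l 2" and l0: "0 < l"
begin

definition gmin :: "int \<Rightarrow> bool" where
  "gmin g \<longleftrightarrow> g \<noteq> 0 \<and> (\<forall>B'. ueq l A B' \<and> B' $$ (0,0) \<noteq> 0 \<longrightarrow> nat \<bar>g\<bar> \<le> nat \<bar>B' $$ (0,0)\<bar>)"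

lemma dims: "ueq l A B \<Longrightarrow> dim_row B = l \<and> dim_col B = 2"
  using ueq_carrier[OF A] by auto

lemma step1_dvd: assumes g: "gmin g" and B: "ueq l A B" "B $$ (0,0) = g" and k: "k < l"
  shows "g dvd B $$ (k,0)" "g dvd B $$ (0,1)"
proof -
  have d: "dim_row B = l" "dim_col B = 2" using dims[OF B(1)] by auto
  have g0: "g \<noteq> 0" using g unfolding gmin_def by auto
  show "g dvd B $$ (k,0)"
  proof (rule ccontr)
    assume nd: "\<not> g dvd B $$ (k,0)"
    have k0: "k \<noteq> 0" proof assume "k = 0" then show False using nd B by simp qed
    define B' where "B' = swaprows 0 k (addrow (- (B $$ (k,0) div g)) k 0 B)"
    have "ueq l A B'" unfolding B'_def using k k0
      by (intro ueq_swaprows[OF A] ueq_addrow[OF A B(1)]) auto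
    moreover have "B' $$ (0,0) = B $$ (k,0) mod g" unfolding B'_def using d k k0 B(2) mod_small(3)[OF nd g0] by simp
    ultimately show False using g mod_small[OF nd g0] unfolding gmin_def by force
  qed
  show "g dvd B $$ (0,1)"
  proof (rule ccontr)
    assume nd: "\<not> g dvd B $$ (0,1)"
    define B' where "B' = swapcols 0 1 (addcol (- (B $$ (0,1) div g)) 1 0 B)"
    have "ueq l A B'" unfolding B'_def
      by (intro ueq_swapcols[OF A] ueq_addcol[OF A B(1)]) auto
    moreover have "B' $$ (0,0) = B $$ (0,1) mod g" unfolding B'_def using d k B(2) mod_small(3)[OF nd g0] by simp
    ultimately show False using g mod_small[OF nd g0] unfolding gmin_def by force
  qed
qed

definition R :: "int \<Rightarrow> int mat \<Rightarrow> bool" where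
  "R g B \<longleftrightarrow> ueq l A B \<and> B $$ (0,0) = g \<and> (\<forall>k. 1 \<le> k \<longrightarrow> k < l \<longrightarrow> B $$ (k,0) = 0) \<and> B $$ (0,1) = 0"

lemma step1_clear: assumes g: "gmin g" and B: "ueq l A B" "B $$ (0,0) = g"
  shows "\<exists>B'. R g B'"
proof -
  define nz :: "int mat \<Rightarrow> nat" where "nz B = card {k \<in> {1..<l}. B $$ (k,0) \<noteq> 0} + (if B $$ (0,1) = 0 then 0 else 1)" for B
  have "\<exists>B1. (ueq l A B1 \<and> B1 $$ (0,0) = g) \<and> (\<forall>B'. ueq l A B' \<and> B' $$ (0,0) = g \<longrightarrow> nz B1 \<le> nz B')"
    by (rule ex_has_least_nat[of "\<lambda>B. ueq l A B \<and> B $$ (0,0) = g" B nz]) (use B in blast)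
  then obtain B1 where B1: "ueq l A B1" "B1 $$ (0,0) = g" and mn: "\<And>B'. ueq l A B' \<and> B' $$ (0,0) = g \<Longrightarrow> nz B1 \<le> nz B'"
    by blast
  have d: "dim_row B1 = l" "dim_col B1 = 2" using dims[OF B1(1)] by auto
  have g0: "g \<noteq> 0" using g unfolding gmin_def by auto
  have c01: "B1 $$ (0,1) = 0"
  proof (rule ccontr)
    assume ne: "B1 $$ (0,1) \<noteq> 0"
    define B' where "B' = addcol (- (B1 $$ (0,1) div g)) 1 0 B1"
    have u: "ueq l A B'" unfolding B'_def by (intro ueq_addcol[OF A B1(1)]) auto
    have dv: "g dvd B1 $$ (0,1)" using step1_dvd[OF g B1 l0] by auto
    have e00: "B' $$ (0,0) = g" unfolding B'_def using d l0 B1(2) by simp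
    have e01: "B' $$ (0,1) = 0" unfolding B'_def using d l0 B1(2) dv g0 by simp
    have "{k \<in> {1..<l}. B' $$ (k,0) \<noteq> 0} = {k \<in> {1..<l}. B1 $$ (k,0) \<noteq> 0}" unfolding B'_def using d by auto
    then have "nz B' < nz B1" unfolding nz_def using e01 ne by simp
    then show False using mn[of B'] u e00 by auto
  qed
  have c0: "\<forall>k. 1 \<le> k \<longrightarrow> k < l \<longrightarrow> B1 $$ (k,0) = 0"
  proof (rule ccontr)
    assume "\<not> ?thesis"
    then obtain k where k: "1 \<le> k" "k < l" "B1 $$ (k,0) \<noteq> 0" by auto
    define B' where "B' = addrow (- (B1 $$ (k,0) div g)) k 0 B1"
    have u: "ueq l A B'" unfolding B'_def using k by (intro ueq_addrow[OF A B1(1)]) auto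
    have dv: "g dvd B1 $$ (k,0)" using step1_dvd[OF g B1 k(2)] by auto
    have e00: "B' $$ (0,0) = g" unfolding B'_def using d k B1(2) by simp
    have e01: "B' $$ (0,1) = B1 $$ (0,1)" unfolding B'_def using d k by simp
    have "B' $$ (k,0) = - (B1 $$ (k,0) div g) * B1 $$ (0,0) + B1 $$ (k,0)" unfolding B'_def using d k by simp
    then have ek: "B' $$ (k,0) = 0" using B1(2) dv g0 by simp
    have eq: "\<forall>x\<in>{1..<l}. x \<noteq> k \<longrightarrow> B' $$ (x,0) = B1 $$ (x,0)" unfolding B'_def using d by simp
    have "{k \<in> {1..<l}. B' $$ (k,0) \<noteq> 0} \<subseteq> {k \<in> {1..<l}. B1 $$ (k,0) \<noteq> 0} - {k}"
    proof (intro subsetI)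
      fix x assume x: "x \<in> {k \<in> {1..<l}. B' $$ (k,0) \<noteq> 0}"
      then have x1: "x \<in> {1..<l}" "B' $$ (x,0) \<noteq> 0" by auto
      then have "x \<noteq> k" using ek by auto
      then show "x \<in> {k \<in> {1..<l}. B1 $$ (k,0) \<noteq> 0} - {k}" using eq x1 by auto
    qed
    moreover have "k \<in> {k \<in> {1..<l}. B1 $$ (k,0) \<noteq> 0}" using k by auto
    ultimately have sub: "{k \<in> {1..<l}. B' $$ (k,0) \<noteq> 0} \<subset> {k \<in> {1..<l}. B1 $$ (k,0) \<noteq> 0}" by blast
    have "card {k \<in> {1..<l}. B' $$ (k,0) \<noteq> 0} < card {k \<in> {1..<l}. B1 $$ (k,0) \<noteq> 0}"
      by (rule psubset_card_mono[OF _ sub]) auto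
    then have "nz B' < nz B1" unfolding nz_def using e01 by simp
    then show False using mn[of B'] u e00 by auto
  qed
  show ?thesis using B1 c01 c0 unfolding R_def by auto
qed


lemma step2_dvd: assumes g: "gmin g" and B: "R g B" and k: "k < l"
  shows "g dvd B $$ (k,1)"
proof (cases "k = 0")
  case True then show ?thesis using B unfolding R_def by auto
next
  case False
  have u0: "ueq l A B" using B unfolding R_def by auto
  have d: "dim_row B = l" "dim_col B = 2" using dims[OF u0] by auto
  define B' where "B' = addrow 1 0 k B"
  have u: "ueq l A B'" unfolding B'_def using False k l0 by (intro ueq_addrow[OF A u0]) auto
  have e00: "B' $$ (0,0) = g" unfolding B'_def using d k l0 B False unfolding R_def by simp
  have e01: "B' $$ (0,1) = B $$ (k,1)" unfolding B'_def using d k l0 B False unfolding R_def by simp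
  show ?thesis using step1_dvd(2)[OF g u e00 l0] e01 by simp
qed

lemma R_addrow: assumes "R g B" "1 \<le> k" "1 \<le> m" "k < l" "m < l" "k \<noteq> m"
  shows "R g (addrow a k m B)"
proof -
  have u0: "ueq l A B" using assms unfolding R_def by auto
  have d: "dim_row B = l" "dim_col B = 2" using dims[OF u0] by auto
  have "ueq l A (addrow a k m B)" using assms by (intro ueq_addrow[OF A u0]) auto
  then show ?thesis using assms d l0 unfolding R_def by auto
qed

lemma R_swaprows: assumes "R g B" "1 \<le> k" "1 \<le> m" "k < l" "m < l"
  shows "R g (swaprows k m B)"
proof -
  have u0: "ueq l A B" using assms unfolding R_def by auto
  have d: "dim_row B = l" "dim_col B = 2" using dims[OF u0] by auto
  have "ueq l A (swaprows k m B)" using assms by (intro ueq_swaprows[OF A u0]) auto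
  then show ?thesis using assms d l0 unfolding R_def by auto
qed

lemma step3: assumes g: "gmin g" and B0: "R g B0" "B0 $$ (k0,1) \<noteq> 0" "k0 < l"
  shows "\<exists>B. R g B \<and> B $$ (1,1) \<noteq> 0 \<and> (\<forall>k. 2 \<le> k \<longrightarrow> k < l \<longrightarrow> B $$ (k,1) = 0) \<and> 2 \<le> l"
proof -
  have k01: "1 \<le> k0" using B0 unfolding R_def by (cases k0) auto
  then have l2: "2 \<le> l" using B0 by auto
  have u00: "ueq l A B0" using B0 unfolding R_def by auto
  have d0: "dim_row B0 = l" "dim_col B0 = 2" using dims[OF u00] by auto
  define B1 where "B1 = swaprows 1 k0 B0"
  have RB1: "R g B1" unfolding B1_def using k01 l2 B0 by (intro R_swaprows) auto
  have B11: "B1 $$ (1,1) \<noteq> 0" unfolding B1_def using d0 l2 B0 by simp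
  have "\<exists>Bm. (R g Bm \<and> Bm $$ (1,1) \<noteq> 0) \<and> (\<forall>B'. R g B' \<and> B' $$ (1,1) \<noteq> 0 \<longrightarrow> nat \<bar>Bm $$ (1,1)\<bar> \<le> nat \<bar>B' $$ (1,1)\<bar>)"
    by (rule ex_has_least_nat[of "\<lambda>B. R g B \<and> B $$ (1,1) \<noteq> 0" B1 "\<lambda>B. nat \<bar>B $$ (1,1)\<bar>"]) (use RB1 B11 in blast)
  then obtain Bm where Bm: "R g Bm" "Bm $$ (1,1) \<noteq> 0" and mnh: "\<And>B'. R g B' \<and> B' $$ (1,1) \<noteq> 0 \<Longrightarrow> nat \<bar>Bm $$ (1,1)\<bar> \<le> nat \<bar>B' $$ (1,1)\<bar>"
    by blast
  define h where "h = Bm $$ (1,1)"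
  have h0: "h \<noteq> 0" using Bm h_def by auto
  have hdvd: "h dvd B $$ (k,1)" if RB: "R g B" "B $$ (1,1) = h" "2 \<le> k" "k < l" for B k
  proof (rule ccontr)
    assume nd: "\<not> h dvd B $$ (k,1)"
    have u0: "ueq l A B" using RB unfolding R_def by auto
    have d: "dim_row B = l" "dim_col B = 2" using dims[OF u0] by auto
    define B' where "B' = swaprows 1 k (addrow (- (B $$ (k,1) div h)) k 1 B)"
    have "R g B'" unfolding B'_def using RB l2 by (intro R_swaprows R_addrow) auto
    moreover have "B' $$ (1,1) = B $$ (k,1) mod h" unfolding B'_def using d RB l2 mod_small(3)[OF nd h0] by simp
    ultimately show False using mnh[of B'] mod_small[OF nd h0] h_def by force
  qed
  define nz :: "int mat \<Rightarrow> nat" where "nz B = card {k \<in> {2..<l}. B $$ (k,1) \<noteq> 0}" for B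
  have "\<exists>B1. (R g B1 \<and> B1 $$ (1,1) = h) \<and> (\<forall>B'. R g B' \<and> B' $$ (1,1) = h \<longrightarrow> nz B1 \<le> nz B')"
    by (rule ex_has_least_nat[of "\<lambda>B. R g B \<and> B $$ (1,1) = h" Bm nz]) (use Bm h_def in blast)
  then obtain Bf where Bf: "R g Bf" "Bf $$ (1,1) = h" and mn: "\<And>B'. R g B' \<and> B' $$ (1,1) = h \<Longrightarrow> nz Bf \<le> nz B'"
    by blast
  have uf: "ueq l A Bf" using Bf unfolding R_def by auto
  have d: "dim_row Bf = l" "dim_col Bf = 2" using dims[OF uf] by auto
  have c0: "\<forall>k. 2 \<le> k \<longrightarrow> k < l \<longrightarrow> Bf $$ (k,1) = 0"
  proof (rule ccontr)
    assume "\<not> ?thesis"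
    then obtain k where k: "2 \<le> k" "k < l" "Bf $$ (k,1) \<noteq> 0" by auto
    define B' where "B' = addrow (- (Bf $$ (k,1) div h)) k 1 Bf"
    have u: "R g B'" unfolding B'_def using k by (intro R_addrow[OF Bf(1)]) auto
    have dv: "h dvd Bf $$ (k,1)" using hdvd[OF Bf k(1,2)] by auto
    have e11: "B' $$ (1,1) = h" unfolding B'_def using d k Bf(2) by simp
    have "B' $$ (k,1) = - (Bf $$ (k,1) div h) * Bf $$ (1,1) + Bf $$ (k,1)" unfolding B'_def using d k by simp
    then have ek: "B' $$ (k,1) = 0" using Bf(2) dv h0 by simp
    have eq: "\<forall>x\<in>{2..<l}. x \<noteq> k \<longrightarrow> B' $$ (x,1) = Bf $$ (x,1)" unfolding B'_def using d by simp
    have "{k \<in> {2..<l}. B' $$ (k,1) \<noteq> 0} \<subseteq> {k \<in> {2..<l}. Bf $$ (k,1) \<noteq> 0} - {k}"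
    proof (intro subsetI)
      fix x assume x: "x \<in> {k \<in> {2..<l}. B' $$ (k,1) \<noteq> 0}"
      then have x1: "x \<in> {2..<l}" "B' $$ (x,1) \<noteq> 0" by auto
      then have "x \<noteq> k" using ek by auto
      then show "x \<in> {k \<in> {2..<l}. Bf $$ (k,1) \<noteq> 0} - {k}" using eq x1 by auto
    qed
    moreover have "k \<in> {k \<in> {2..<l}. Bf $$ (k,1) \<noteq> 0}" using k by auto
    ultimately have sub: "{k \<in> {2..<l}. B' $$ (k,1) \<noteq> 0} \<subset> {k \<in> {2..<l}. Bf $$ (k,1) \<noteq> 0}" by blast
    have "card {k \<in> {2..<l}. B' $$ (k,1) \<noteq> 0} < card {k \<in> {2..<l}. Bf $$ (k,1) \<noteq> 0}"
      by (rule psubset_card_mono[OF _ sub]) auto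
    then have "nz B' < nz Bf" unfolding nz_def by simp
    then show False using mn[of B'] u e11 by auto
  qed
  show ?thesis using Bf c0 h0 l2 by auto
qed


lemma sgn_self: "sgn (g::int) * g = \<bar>g\<bar>" by (simp add: sgn_if)
lemma sgn_unit: "(g::int) \<noteq> 0 \<Longrightarrow> sgn g = 1 \<or> sgn g = -1" by (simp add: sgn_if)

lemma ueq_smith: assumes "ueq l A D" shows "\<exists>P Q. P \<in> carrier_mat (dim_row A) (dim_row A) \<and> Q \<in> carrier_mat (dim_col A) (dim_col A) \<and>
        (det P = 1 \<or> det P = -1) \<and> (det Q = 1 \<or> det Q = -1) \<and> P * A * Q = D"
  using assms A unfolding ueq_def by auto

lemma smith_exists_aux: assumes nz: "A $$ (i,j) \<noteq> 0" "i < l" "j < 2"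
  shows "\<exists>D r e. is_smith_form A D r e \<and> r \<ge> 1"
proof -
  have dA: "dim_row A = l" "dim_col A = 2" using A by auto
  define B0 where "B0 = swaprows 0 i (swapcols 0 j A)"
  have u0: "ueq l A B0" unfolding B0_def using nz l0 by (intro ueq_swaprows[OF A] ueq_swapcols[OF A] ueq_refl[OF A]) auto
  have "B0 $$ (0,0) = A $$ (i,j)" unfolding B0_def using dA nz l0 by auto
  then have b00: "B0 $$ (0,0) \<noteq> 0" using nz by simp
  have "\<exists>Bg. (ueq l A Bg \<and> Bg $$ (0,0) \<noteq> 0) \<and> (\<forall>B'. ueq l A B' \<and> B' $$ (0,0) \<noteq> 0 \<longrightarrow> nat \<bar>Bg $$ (0,0)\<bar> \<le> nat \<bar>B' $$ (0,0)\<bar>)"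
    by (rule ex_has_least_nat[of "\<lambda>B. ueq l A B \<and> B $$ (0,0) \<noteq> 0" B0 "\<lambda>B. nat \<bar>B $$ (0,0)\<bar>"]) (use u0 b00 in blast)
  then obtain Bg where Bg: "ueq l A Bg" "Bg $$ (0,0) \<noteq> 0" and mn: "\<forall>B'. ueq l A B' \<and> B' $$ (0,0) \<noteq> 0 \<longrightarrow> nat \<bar>Bg $$ (0,0)\<bar> \<le> nat \<bar>B' $$ (0,0)\<bar>"
    by blast
  define g where "g = Bg $$ (0,0)"
  have g: "gmin g" unfolding gmin_def g_def using Bg mn by auto
  have g0: "g \<noteq> 0" using Bg g_def by auto
  obtain Bc where Bc: "R g Bc" using step1_clear[OF g Bg(1)] g_def by auto
  have uc: "ueq l A Bc" using Bc unfolding R_def by auto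
  have dc: "dim_row Bc = l" "dim_col Bc = 2" using dims[OF uc] by auto
  show ?thesis
  proof (cases "\<exists>k<l. Bc $$ (k,1) \<noteq> 0")
    case True
    then obtain k0 where k0: "k0 < l" "Bc $$ (k0,1) \<noteq> 0" by auto
    obtain B where B: "R g B" "B $$ (1,1) \<noteq> 0" "\<forall>k. 2 \<le> k \<longrightarrow> k < l \<longrightarrow> B $$ (k,1) = 0" "2 \<le> l"
      using step3[OF g Bc k0(2,1)] by auto
    define h where "h = B $$ (1,1)"
    have h0: "h \<noteq> 0" using B h_def by auto
    have u: "ueq l A B" using B unfolding R_def by auto
    have d: "dim_row B = l" "dim_col B = 2" using dims[OF u] by auto
    have gh: "g dvd h" using step2_dvd[OF g B(1), of 1] B(4) h_def by auto
    define D where "D = multrow 0 (sgn g) (multrow 1 (sgn h) B)"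
    have uD: "ueq l A D" unfolding D_def using B(4) l0 sgn_unit[OF g0] sgn_unit[OF h0]
      by (intro ueq_multrow[OF A] ueq_multrow[OF A u]) auto
    have dD: "D \<in> carrier_mat l 2" using ueq_carrier[OF A uD] .
    have D00: "D $$ (0,0) = \<bar>g\<bar>" unfolding D_def using d l0 B(1) sgn_self[of g] unfolding R_def by simp
    have D11: "D $$ (1,1) = \<bar>h\<bar>" unfolding D_def using d B(4) h_def sgn_self[of h] by simp
    have off: "D $$ (a,b) = 0" if "a < l" "b < 2" "a \<noteq> b" for a b
    proof -
      have "B $$ (a,b) = 0"
      proof (cases "b = 0")
        case True then show ?thesis using B(1) that unfolding R_def by auto
      next
        case False then have b1: "b = 1" using that by auto
        show ?thesis
        proof (cases "a = 0")
          case True then show ?thesis using B(1) b1 unfolding R_def by auto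
        next
          case False then show ?thesis using B(3) b1 that by auto
        qed
      qed
      moreover have "D $$ (a,b) = (if a = 0 then sgn g else 1) * ((if a = 1 then sgn h else 1) * B $$ (a,b))"
        unfolding D_def using d that by simp
      ultimately show ?thesis by simp
    qed
    define e where "e = (\<lambda>t::nat. if t = 0 then \<bar>g\<bar> else \<bar>h\<bar>)"
    have "is_smith_form A D 2 e"
      unfolding is_smith_form_def
    proof (intro conjI)
      show "\<exists>P Q. P \<in> carrier_mat (dim_row A) (dim_row A) \<and> Q \<in> carrier_mat (dim_col A) (dim_col A) \<and>
        (det P = 1 \<or> det P = -1) \<and> (det Q = 1 \<or> det Q = -1) \<and> P * A * Q = D" by (rule ueq_smith[OF uD])
      show "D \<in> carrier_mat (dim_row A) (dim_col A)" using dD dA by simp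
      show "2 \<le> min (dim_row A) (dim_col A)" using dA B(4) by simp
      show "\<forall>i<dim_row A. \<forall>j<dim_col A. i \<noteq> j \<longrightarrow> D $$ (i, j) = 0" using off dA by auto
      show "\<forall>i<2. D $$ (i, i) = e i \<and> e i > 0"
      proof (intro allI impI)
        fix i :: nat assume "i < 2" then have "i = 0 \<or> i = 1" by auto
        then show "D $$ (i, i) = e i \<and> e i > 0" using D00 D11 g0 h0 e_def by auto
      qed
      show "\<forall>i. i + 1 < 2 \<longrightarrow> e i dvd e (i + 1)" using gh e_def by auto
      show "\<forall>i. 2 \<le> i \<and> i < min (dim_row A) (dim_col A) \<longrightarrow> D $$ (i, i) = 0" using dA by auto
    qed
    then show ?thesis by (intro exI[of _ D] exI[of _ 2] exI[of _ e]) auto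
  next
    case False
    define D where "D = multrow 0 (sgn g) Bc"
    have uD: "ueq l A D" unfolding D_def using l0 sgn_unit[OF g0]
      by (intro ueq_multrow[OF A uc]) auto
    have dD: "D \<in> carrier_mat l 2" using ueq_carrier[OF A uD] .
    have D00: "D $$ (0,0) = \<bar>g\<bar>" unfolding D_def using dc l0 Bc sgn_self[of g] unfolding R_def by simp
    have off: "D $$ (a,b) = 0" if "a < l" "b < 2" "a \<noteq> 0 \<or> b \<noteq> 0" for a b
    proof -
      have "Bc $$ (a,b) = 0"
      proof (cases "b = 0")
        case True then show ?thesis using Bc that unfolding R_def by auto
      next
        case False then have b1: "b = 1" using that by auto
        then show ?thesis using \<open>\<not> (\<exists>k<l. Bc $$ (k,1) \<noteq> 0)\<close> that by auto
      qed
      moreover have "D $$ (a,b) = (if a = 0 then sgn g else 1) * Bc $$ (a,b)"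
        unfolding D_def using dc that by simp
      ultimately show ?thesis by simp
    qed
    define e where "e = (\<lambda>t::nat. \<bar>g\<bar>)"
    have "is_smith_form A D 1 e"
      unfolding is_smith_form_def
    proof (intro conjI)
      show "\<exists>P Q. P \<in> carrier_mat (dim_row A) (dim_row A) \<and> Q \<in> carrier_mat (dim_col A) (dim_col A) \<and>
        (det P = 1 \<or> det P = -1) \<and> (det Q = 1 \<or> det Q = -1) \<and> P * A * Q = D" by (rule ueq_smith[OF uD])
      show "D \<in> carrier_mat (dim_row A) (dim_col A)" using dD dA by simp
      show "1 \<le> min (dim_row A) (dim_col A)" using dA l0 by simp
      show "\<forall>i<dim_row A. \<forall>j<dim_col A. i \<noteq> j \<longrightarrow> D $$ (i, j) = 0" using off dA by auto
      show "\<forall>i<1. D $$ (i, i) = e i \<and> e i > 0" using D00 g0 e_def by auto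
      show "\<forall>i. i + 1 < 1 \<longrightarrow> e i dvd e (i + 1)" by auto
      show "\<forall>i. 1 \<le> i \<and> i < min (dim_row A) (dim_col A) \<longrightarrow> D $$ (i, i) = 0" using dA off by auto
    qed
    then show ?thesis by (intro exI[of _ D] exI[of _ 1] exI[of _ e]) auto
  qed
qed

end

lemma smith_exists: assumes A: "A \<in> carrier_mat l 2" and nz: "A $$ (i,j) \<noteq> 0" "i < l" "j < 2"
  shows "\<exists>D r e. is_smith_form A D r e \<and> r \<ge> 1"
  using smith_exists_aux[OF A _ nz] nz(2) by auto

lemma adj_cancel: assumes M: "(M :: int mat) \<in> carrier_mat n n" and x: "x \<in> carrier_vec n"
  shows "adj_mat M *\<^sub>v (M *\<^sub>v x) = det M \<cdot>\<^sub>v x" "M *\<^sub>v (adj_mat M *\<^sub>v x) = det M \<cdot>\<^sub>v x"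
proof -
  have "det M \<cdot>\<^sub>v x = (det M \<cdot>\<^sub>m 1\<^sub>m n) *\<^sub>v x" using x by auto
  then have e: "det M \<cdot>\<^sub>v x = (adj_mat M * M) *\<^sub>v x" "det M \<cdot>\<^sub>v x = (M * adj_mat M) *\<^sub>v x"
    using adj_mat[OF M] by auto
  show "adj_mat M *\<^sub>v (M *\<^sub>v x) = det M \<cdot>\<^sub>v x" using e(1) adj_mat[OF M] M x by (metis assoc_mult_mat_vec)
  show "M *\<^sub>v (adj_mat M *\<^sub>v x) = det M \<cdot>\<^sub>v x" using e(2) adj_mat[OF M] M x by (metis assoc_mult_mat_vec)
qed

lemma mv2: assumes "M \<in> carrier_mat m 2" "x \<in> carrier_vec 2" "k < m"
  shows "(M *\<^sub>v x) $ k = M $$ (k,0) * x $ 0 + M $$ (k,1) * x $ 1"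
  using assms by (simp add: scalar_prod_def numeral_2_eq_2)

lemma pd_mult: assumes "M \<in> carrier_mat m n" "x \<in> carrier_vec n" "\<forall>t<n. (p::int) dvd x $ t" "k < m"
  shows "p dvd (M *\<^sub>v x) $ k"
  using assms by (auto simp: scalar_prod_def intro!: dvd_sum)

lemma smith_analysis:
  fixes A D :: "int mat" and p c :: int
  assumes A: "A \<in> carrier_mat l 2"
    and nodep: "\<And>w0 w1. (\<forall>k<l. w0 * A $$ (k,0) + w1 * A $$ (k,1) = 0) \<Longrightarrow> w0 = 0 \<and> w1 = 0"
    and md: "\<forall>k<l. p dvd A $$ (k,0) - c * A $$ (k,1)"
    and p: "prime p"
    and S: "is_smith_form A D r e" and r: "r \<ge> 1"
  shows "p dvd e (r - 1)"
proof -
  have dA: "dim_row A = l" "dim_col A = 2" using A by auto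
  obtain P Q where PQ: "P \<in> carrier_mat l l" "Q \<in> carrier_mat 2 2" "det P = 1 \<or> det P = -1"
    "det Q = 1 \<or> det Q = -1" "P * A * Q = D" using S dA unfolding is_smith_form_def by auto
  have D: "D \<in> carrier_mat l 2" and rle: "r \<le> min l 2"
    and off: "\<forall>i<l. \<forall>j<2. i \<noteq> j \<longrightarrow> D $$ (i, j) = 0"
    and diag: "\<forall>i<r. D $$ (i, i) = e i \<and> e i > 0"
    and dv: "\<forall>i. i + 1 < r \<longrightarrow> e i dvd e (i + 1)"
    and zer: "\<forall>i. r \<le> i \<and> i < min l 2 \<longrightarrow> D $$ (i, i) = 0"
    using S dA unfolding is_smith_form_def by auto
  have Dv: "D *\<^sub>v x = P *\<^sub>v (A *\<^sub>v (Q *\<^sub>v x))" if "x \<in> carrier_vec 2" for x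
  proof -
    have PA: "P * A \<in> carrier_mat l 2" using PQ A by simp
    have "D *\<^sub>v x = (P * A) *\<^sub>v (Q *\<^sub>v x)" using assoc_mult_mat_vec[OF PA PQ(2) that] PQ(5) by simp
    also have "\<dots> = P *\<^sub>v (A *\<^sub>v (Q *\<^sub>v x))" using assoc_mult_mat_vec[OF PQ(1) A, of "Q *\<^sub>v x"] PQ(2) that by simp
    finally show ?thesis .
  qed
  have dP: "det P \<noteq> 0" "det Q \<noteq> 0" using PQ by auto
  have r2: "r = 2"
  proof (rule ccontr)
    assume "r \<noteq> 2"
    then have r1: "r = 1" using r rle by auto
    define u :: "int vec" where "u = unit_vec 2 1"
    have uc: "u \<in> carrier_vec 2" unfolding u_def by simp
    define w where "w = Q *\<^sub>v u"
    have wc: "w \<in> carrier_vec 2" unfolding w_def using PQ uc by simp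
    define y where "y = A *\<^sub>v w"
    have yc: "y \<in> carrier_vec l" unfolding y_def using A wc by simp
    have D1: "D $$ (k,1) = 0" if "k < l" for k
      using off zer r1 that by (cases "k = 1") auto
    have "D *\<^sub>v u = 0\<^sub>v l" unfolding u_def using D D1
      by (intro eq_vecI) (auto simp: scalar_prod_def numeral_2_eq_2)
    then have "P *\<^sub>v y = 0\<^sub>v l" using Dv[OF uc] unfolding y_def w_def by simp
    then have "det P \<cdot>\<^sub>v y = adj_mat P *\<^sub>v 0\<^sub>v l" using adj_cancel(1)[OF PQ(1) yc] by simp
    also have "\<dots> = 0\<^sub>v l" using adj_mat(1)[OF PQ(1)] by (intro eq_vecI) (auto simp: scalar_prod_def)
    finally have "det P \<cdot>\<^sub>v y = 0\<^sub>v l" .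
    then have y0: "y $ k = 0" if "k < l" for k using that yc dP
      by (metis carrier_vecD index_smult_vec(1) index_zero_vec(1) mult_eq_0_iff)
    have "\<forall>k<l. w $ 0 * A $$ (k,0) + w $ 1 * A $$ (k,1) = 0"
      using y0 mv2[OF A wc] unfolding y_def by (auto simp: ac_simps)
    from nodep[OF this] have "w = 0\<^sub>v 2" using wc by (intro eq_vecI) (auto simp: less_2_cases_iff)
    then have "det Q \<cdot>\<^sub>v u = adj_mat Q *\<^sub>v 0\<^sub>v 2" using adj_cancel(1)[OF PQ(2) uc] unfolding w_def by simp
    also have "\<dots> = 0\<^sub>v 2" using adj_mat(1)[OF PQ(2)] by (intro eq_vecI) (auto simp: scalar_prod_def)
    finally have "(det Q \<cdot>\<^sub>v u) $ 1 = 0" by simp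
    then show False using dP unfolding u_def by simp
  qed
  have e0: "D $$ (0,0) = e 0" "D $$ (1,1) = e 1" "e 0 dvd e 1" using diag dv r2 by auto
  show ?thesis
  proof (rule ccontr)
    assume "\<not> ?thesis"
    then have n1: "\<not> p dvd e 1" using r2 by simp
    then have n0: "\<not> p dvd e 0" using e0(3) dvd_trans by blast
    have l2: "2 \<le> l" using rle r2 by simp
    define v :: "int vec" where "v = vec 2 (\<lambda>t. if t = 0 then 1 else - c)"
    have vc: "v \<in> carrier_vec 2" unfolding v_def by simp
    have pAv: "\<forall>k<l. p dvd (A *\<^sub>v v) $ k" using md mv2[OF A vc] unfolding v_def by (auto simp: ac_simps)
    define u where "u = adj_mat Q *\<^sub>v v"
    have uc: "u \<in> carrier_vec 2" unfolding u_def using adj_mat(1)[OF PQ(2)] vc by simp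
    have Qu: "Q *\<^sub>v u = det Q \<cdot>\<^sub>v v" unfolding u_def using adj_cancel(2)[OF PQ(2) vc] .
    have "\<forall>k<l. p dvd (A *\<^sub>v (det Q \<cdot>\<^sub>v v)) $ k" using pAv A vc by auto
    then have "\<forall>k<l. p dvd (P *\<^sub>v (A *\<^sub>v (det Q \<cdot>\<^sub>v v))) $ k" using pd_mult[OF PQ(1)] A vc by auto
    then have pD: "\<forall>k<l. p dvd (D *\<^sub>v u) $ k" using Dv[OF uc] Qu by simp
    have "(D *\<^sub>v u) $ 0 = e 0 * u $ 0" using mv2[OF D uc, of 0] l2 e0 off by simp
    moreover have "p dvd (D *\<^sub>v u) $ 0" using pD l2 by simp
    ultimately have "p dvd e 0 * u $ 0" by simp
    then have u0: "p dvd u $ 0" using n0 p by (simp add: prime_dvd_mult_iff)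
    have "(D *\<^sub>v u) $ 1 = e 1 * u $ 1" using mv2[OF D uc, of 1] l2 e0 off by simp
    moreover have "p dvd (D *\<^sub>v u) $ 1" using pD l2 by simp
    ultimately have "p dvd e 1 * u $ 1" by simp
    then have u1: "p dvd u $ 1" using n1 p by (simp add: prime_dvd_mult_iff)
    have "\<forall>t<2. p dvd u $ t" using u0 u1 by (auto simp: less_2_cases_iff)
    then have "p dvd (Q *\<^sub>v u) $ 0" using pd_mult[OF PQ(2) uc] by auto
    then have "p dvd det Q" using Qu unfolding v_def by simp
    then have "p dvd 1" using PQ(4) by auto
    then show False using p not_prime_unit by blast
  qed
qed

theorem proposition7p4:
  fixes C :: "int mat" and l n p :: nat
  assumes "C \<in> carrier_mat l n"
    and "primitive_columns C"
    and "distinct_hyperplanes C"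
    and "essential_arr C"
    and "prime p"
    and "\<not> good_prime C p"
  shows "int p dvd lcm_period C"
proof -
  have dC: "dim_row C = l" "dim_col C = n" using assms(1) by auto
  obtain i j c where ij: "i < j" "j < n" and cg: "\<forall>k<l. [C $$ (k, i) = c * C $$ (k, j)] (mod int p)"
    using assms(6) dC unfolding good_prime_def by auto
  define J where "J = {i, j}"
  have sl: "sorted_list_of_set J = [i, j]" unfolding J_def using ij by simp
  have cJ: "card J = 2" unfolding J_def using ij by simp
  define A where "A = col_submat C J"
  have A: "A \<in> carrier_mat l 2" unfolding A_def col_submat_def using cJ dC by simp
  have A0: "A $$ (k,0) = C $$ (k,i)" and A1: "A $$ (k,1) = C $$ (k,j)" if "k < l" for k
    unfolding A_def col_submat_def using cJ dC sl that by auto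
  have nzc: "\<exists>k<l. C $$ (k,t) \<noteq> 0" if "t < n" for t
  proof -
    have p2: "prime (2::int)" by simp
    have "\<not> (\<forall>k<l. (2::int) dvd C $$ (k, t))" using assms(2) that dC p2 unfolding primitive_columns_def
      by blast
    then obtain k where "k < l" "\<not> (2::int) dvd C $$ (k, t)" by blast
    then show ?thesis by (intro exI[of _ k]) auto
  qed
  obtain k0 where k0: "k0 < l" "C $$ (k0,i) \<noteq> 0" using nzc[of i] ij by auto
  have nodep: "w0 = 0 \<and> w1 = 0" if h: "\<forall>k<l. w0 * A $$ (k,0) + w1 * A $$ (k,1) = 0" for w0 w1
  proof (cases "w1 = 0")
    case True
    then have "w0 * C $$ (k0,i) = 0" using h k0 A0 by auto
    then show ?thesis using True k0 by simp
  next
    case False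
    define q :: rat where "q = - rat_of_int w0 / rat_of_int w1"
    have "\<forall>k<l. rat_of_int (C $$ (k, j)) = q * rat_of_int (C $$ (k, i))"
    proof (intro allI impI)
      fix k assume k: "k < l"
      have "w0 * C $$ (k,i) + w1 * C $$ (k,j) = 0" using h k A0 A1 by auto
      then have "rat_of_int (w0 * C $$ (k,i) + w1 * C $$ (k,j)) = 0" by simp
      then have "rat_of_int w0 * rat_of_int (C $$ (k,i)) + rat_of_int w1 * rat_of_int (C $$ (k,j)) = 0"
        by simp
      then show "rat_of_int (C $$ (k, j)) = q * rat_of_int (C $$ (k, i))" unfolding q_def using False
        by (simp add: field_simps)
    qed
    moreover have "\<not> (\<exists>q::rat. \<forall>k<dim_row C. rat_of_int (C $$ (k, j)) = q * rat_of_int (C $$ (k, i)))"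
      using assms(3) ij dC unfolding distinct_hyperplanes_def by blast
    ultimately show ?thesis using dC by blast
  qed
  have l2: "2 \<le> l"
  proof (rule ccontr)
    assume "\<not> 2 \<le> l"
    then have l1: "l = 1" using k0 by auto
    have "\<forall>k<l. C $$ (0,j) * A $$ (k,0) + (- C $$ (0,i)) * A $$ (k,1) = 0"
    proof (intro allI impI)
      fix k assume "k < l" then have k: "k = 0" using l1 by simp
      show "C $$ (0,j) * A $$ (k,0) + (- C $$ (0,i)) * A $$ (k,1) = 0" using A0[of 0] A1[of 0] l1 k by simp
    qed
    from nodep[OF this] have "C $$ (0,i) = 0" by simp
    then show False using k0 l1 by simp
  qed
  have md: "\<forall>k<l. int p dvd A $$ (k,0) - c * A $$ (k,1)"
  proof (intro allI impI)
    fix k assume k: "k < l"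
    have "[C $$ (k, i) = c * C $$ (k, j)] (mod int p)" using cg k by blast
    then have "int p dvd C $$ (k, i) - c * C $$ (k, j)" by (simp only: cong_iff_dvd_diff)
    then show "int p dvd A $$ (k,0) - c * A $$ (k,1)" using A0[OF k] A1[OF k] by simp
  qed
  have pi: "prime (int p)" using assms(5) by simp
  have ex: "\<exists>x. \<exists>D r e. is_smith_form A D r e \<and> r \<ge> 1 \<and> x = e (r - 1)"
    using smith_exists[OF A, of k0 0] k0 A0 by auto
  obtain D r e where S: "is_smith_form A D r e" "r \<ge> 1" "last_inv_factor A = e (r - 1)"
    using someI_ex[OF ex] unfolding last_inv_factor_def by blast
  have pd: "int p dvd last_inv_factor A" using smith_analysis[OF A nodep md pi S(1,2)] S(3) by simp
  have "last_inv_factor A \<in> {last_inv_factor (col_submat C J) | J.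
      J \<subseteq> {0..<dim_col C} \<and> 1 \<le> card J \<and> card J \<le> dim_row C}"
  proof -
    have "J \<subseteq> {0..<dim_col C}" using ij dC unfolding J_def by auto
    then have "\<exists>J'. last_inv_factor (col_submat C J) = last_inv_factor (col_submat C J') \<and>
      J' \<subseteq> {0..<dim_col C} \<and> 1 \<le> card J' \<and> card J' \<le> dim_row C"
      using cJ l2 dC by (intro exI[of _ J]) simp
    then show ?thesis unfolding A_def by simp
  qed
  then have "last_inv_factor A dvd lcm_period C" unfolding lcm_period_def by (rule dvd_Lcm)
  then show ?thesis using pd dvd_trans by blast
qed

end
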